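(* Let $r\ge 2$ and $k\ge 2$ be integers and $n=k\cdot 2^r$. Then there exists an $r$-regular word of length $n$ over a two-letter alphabet.
   Context: For a word $u=u_1\cdots u_m$ over an alphabet $\mathcal A$ with $b$ letters and an integer $r\ge -1$, $u$ is $r$-regular if for every $k=0,1,\dots,r$ the sum $\sum_{1\le t\le m,\ u_t=c} t^k$ is the same for all letters $c\in\mathcal A$ (a letter not occurring contributes $0$). Here $b=2$. *)

theory Defs
  imports Main
begin

definition pos_power_sum :: "'a list \<Rightarrow> 'a \<Rightarrow> nat \<Rightarrow> nat" where
  "pos_power_sum u c k = (\<Sum>t\<in>{t. 1 \<le> t \<and> t \<le> length u \<and> u ! (t - 1) = c}. t ^ k)"

(* u is r-regular over alphabet A (r \<ge> -1, so r is an int): for every k = 0..r,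
   the power sums agree for all letters of A.  u must be a word over A. *)
definition regular_word :: "'a set \<Rightarrow> int \<Rightarrow> 'a list \<Rightarrow> bool" where
  "regular_word A r u \<longleftrightarrow> set u \<subseteq> A \<and>
     (\<forall>k::nat. int k \<le> r \<longrightarrow> (\<forall>c\<in>A. \<forall>d\<in>A. pos_power_sum u c k = pos_power_sum u d k))"

end

theory Submission
  imports Defs
begin

definition sg :: "bool \<Rightarrow> int" where "sg b = (if b then 1 else -1)"

definition D :: "bool list \<Rightarrow> nat \<Rightarrow> int" where
  "D u j = (\<Sum>i<length u. sg (u!i) * (int i + 1) ^ j)"

lemma pps_alt: "pos_power_sum u c k = (\<Sum>i<length u. if u!i = c then (i+1)^k else 0)"
proof -
  have e: "{t. 1 \<le> t \<and> t \<le> length u \<and> u ! (t - 1) = c} = Suc ` {i\<in>{..<length u}. u!i = c}"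
  proof (rule set_eqI, rule iffI)
    fix t assume "t \<in> {t. 1 \<le> t \<and> t \<le> length u \<and> u ! (t - 1) = c}"
    then have "t - 1 \<in> {i\<in>{..<length u}. u!i = c}" "t = Suc (t - 1)" by auto
    then show "t \<in> Suc ` {i\<in>{..<length u}. u!i = c}" by blast
  qed auto
  have "pos_power_sum u c k = (\<Sum>i\<in>{i\<in>{..<length u}. u!i = c}. (Suc i)^k)"
    unfolding pos_power_sum_def e by (simp add: sum.reindex)
  also have "\<dots> = (\<Sum>i<length u. if u!i = c then (i+1)^k else 0)"
    by (subst sum.inter_filter[symmetric]) auto
  finally show ?thesis .
qed

lemma D_pps: "D u j = int (pos_power_sum u True j) - int (pos_power_sum u False j)"
proof -
  have "D u j = (\<Sum>i<length u. int (if u!i = True then (i+1)^j else 0) - int (if u!i = False then (i+1)^j else 0))"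
    unfolding D_def sg_def by (intro sum.cong) (auto simp: add.commute)
  then show ?thesis by (simp add: pps_alt sum_subtractf of_nat_sum)
qed

lemma reg_iff: "regular_word (UNIV :: bool set) (int r) u \<longleftrightarrow> (\<forall>j\<le>r. D u j = 0)"
proof -
  have "(\<forall>c\<in>(UNIV::bool set). \<forall>d\<in>UNIV. pos_power_sum u c j = pos_power_sum u d j)
      \<longleftrightarrow> pos_power_sum u True j = pos_power_sum u False j" for j
    by (metis (full_types) UNIV_I)
  then show ?thesis unfolding regular_word_def by (auto simp: D_pps)
qed

lemma sum_split: fixes m n :: nat shows "(\<Sum>i<m+n. f i) = (\<Sum>i<m. f i) + (\<Sum>i<n. f (i+m))"
  by (induction n) (auto simp: add.commute add.left_commute)

lemma binom_aux: "(s::int) * (a + b) ^ j = (\<Sum>l\<le>j. of_nat (j choose l) * b^(j-l) * (s * a^l))"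
  unfolding binomial_ring[of a b j] sum_distrib_left by (intro sum.cong refl) (simp add: ac_simps)

lemma swap_aux: "(\<Sum>i<n. \<Sum>l\<le>j. (c l::int) * f i l) = (\<Sum>l\<le>j. c l * (\<Sum>i<n. f i l))"
  by (simp add: sum_distrib_left sum.swap[of _ "{..j}"])

lemma D_append: "D (u @ v) j = D u j + (\<Sum>l\<le>j. of_nat (j choose l) * of_nat (length u)^(j-l) * D v l)"
proof -
  let ?m = "length u"
  have "D (u @ v) j = D u j + (\<Sum>i<length v. sg (v!i) * (int i + 1 + int ?m) ^ j)"
  proof -
    have "D (u @ v) j = (\<Sum>i<?m + length v. sg ((u@v)!i) * (int i + 1) ^ j)"
      unfolding D_def by simp
    also have "\<dots> = (\<Sum>i<?m. sg ((u@v)!i) * (int i + 1) ^ j) + (\<Sum>i<length v. sg ((u@v)!(i + ?m)) * (int (i + ?m) + 1) ^ j)"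
      by (rule sum_split)
    also have "(\<Sum>i<?m. sg ((u@v)!i) * (int i + 1) ^ j) = D u j"
      unfolding D_def by (intro sum.cong refl) (simp add: nth_append)
    also have "(\<Sum>i<length v. sg ((u@v)!(i + ?m)) * (int (i + ?m) + 1) ^ j) = (\<Sum>i<length v. sg (v!i) * (int i + 1 + int ?m) ^ j)"
      by (intro sum.cong refl) (simp add: nth_append add.commute add.left_commute)
    finally show ?thesis .
  qed
  also have "(\<Sum>i<length v. sg (v!i) * (int i + 1 + int ?m) ^ j)
     = (\<Sum>i<length v. \<Sum>l\<le>j. of_nat (j choose l) * of_nat ?m^(j-l) * (sg (v!i) * (int i + 1)^l))"
    by (intro sum.cong refl binom_aux)
  also have "\<dots> = (\<Sum>l\<le>j. of_nat (j choose l) * of_nat ?m^(j-l) * D v l)"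
    unfolding D_def by (rule swap_aux)
  finally show ?thesis .
qed

lemma D_not: "D (map Not v) l = - D v l"
  unfolding D_def by (simp add: sum_negf[symmetric]) (intro sum.cong, auto simp: sg_def)

definition reg :: "nat \<Rightarrow> bool list \<Rightarrow> bool" where "reg r u = (\<forall>j\<le>r. D u j = 0)"

lemma reg_app: "reg r u \<Longrightarrow> reg r v \<Longrightarrow> reg r (u @ v)"
  unfolding reg_def by (auto simp: D_append intro!: sum.neutral)

lemma reg_double: assumes "reg r w" shows "reg (Suc r) (w @ map Not w)"
  unfolding reg_def
proof (intro allI impI)
  fix j assume j: "j \<le> Suc r"
  have "{..j} = insert j {..<j}" by auto
  then have "D (w @ map Not w) j = D w j - D w j
     - (\<Sum>l<j. of_nat (j choose l) * of_nat (length w)^(j-l) * D w l)"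
    by (simp add: D_append D_not sum_negf[symmetric])
  also have "(\<Sum>l<j. of_nat (j choose l) * of_nat (length w)^(j-l) * D w l) = 0"
    using assms j unfolding reg_def by (intro sum.neutral) auto
  finally show "D (w @ map Not w) j = 0" by simp
qed

lemma base8: "reg 2 [True,False,False,True,False,True,True,False]"
  unfolding reg_def
proof (intro allI impI)
  fix j :: nat assume "j \<le> 2"
  then have "j = 0 \<or> j = 1 \<or> j = 2" by auto
  then show "D [True,False,False,True,False,True,True,False] j = 0"
    unfolding D_def sg_def by (auto simp: lessThan_nat_numeral)
qed

lemma base12: "reg 2 [True,False,True,False,False,False,True,True,True,False,True,False]"
  unfolding reg_def
proof (intro allI impI)
  fix j :: nat assume "j \<le> 2"
  then have "j = 0 \<or> j = 1 \<or> j = 2" by auto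
  then show "D [True,False,True,False,False,False,True,True,True,False,True,False] j = 0"
    unfolding D_def sg_def by (auto simp: lessThan_nat_numeral)
qed

lemma base4: "k \<ge> 2 \<Longrightarrow> \<exists>u. length u = 4 * k \<and> reg 2 u"
proof (induction k rule: less_induct)
  case (less k)
  show ?case
  proof (cases "k = 2 \<or> k = 3")
    case True then show ?thesis
    proof
      assume "k = 2" then show ?thesis using base8 by (intro exI[of _ "[True,False,False,True,False,True,True,False]"]) auto
    next
      assume "k = 3" then show ?thesis using base12
        by (intro exI[of _ "[True,False,True,False,False,False,True,True,True,False,True,False]"]) auto
    qed
  next
    case False
    then have "k - 2 \<ge> 2" "k - 2 < k" using less.prems by auto
    then obtain u where u: "length u = 4 * (k-2)" "reg 2 u" using less.IH by blast
    have "reg 2 (u @ [True,False,False,True,False,True,True,False])"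
      using u(2) base8 by (rule reg_app)
    moreover have "length (u @ [True,False,False,True,False,True,True,False]) = 4 * k"
      using u(1) \<open>k - 2 \<ge> 2\<close> by simp
    ultimately show ?thesis by blast
  qed
qed

lemma gen: "r \<ge> 2 \<Longrightarrow> k \<ge> 2 \<Longrightarrow> \<exists>u. length u = k * 2^r \<and> reg r u"
proof (induction r rule: dec_induct)
  case base then show ?case using base4[of k] by (auto simp: mult.commute)
next
  case (step r)
  then obtain w where "length w = k * 2^r" "reg r w" by blast
  then show ?case by (intro exI[of _ "w @ map Not w"]) (auto simp: reg_double)
qed

theorem mainTheorem11:
  fixes r k n :: nat
  assumes "r \<ge> 2" and "k \<ge> 2" and "n = k * 2 ^ r"
  shows "\<exists>u :: bool list. length u = n \<and> regular_word (UNIV :: bool set) (int r) u"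
  using gen[OF assms(1,2)] assms(3) by (auto simp: reg_iff reg_def)

end
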